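(* Let $X$ be a nonempty set and let $\mathcal{S}_1,\mathcal{S}_2\subseteq\mathcal{P}(X)$ with $\emptyset\in\mathcal{S}_1$ and $\emptyset\in\mathcal{S}_2$. Define $\mathcal{S}_1\cup^{\star}\mathcal{S}_2=\{S_1\cup S_2 : S_1\in\mathcal{S}_1,\ S_2\in\mathcal{S}_2\}$. Then $\triangleleft_{\mathcal{S}_1\cup^{\star}\mathcal{S}_2}=\triangleleft_{\mathcal{S}_1}\cup\triangleleft_{\mathcal{S}_2}$ (as subsets of $X\times X$).
   Context: For $\mathcal{S}\subseteq\mathcal{P}(X)$, $\triangleleft_{\mathcal{S}}$ is the relation $\{(x,y)\in X\times X : \exists S\in\mathcal{S},\ x\in S,\ y\notin S\}$. *)

theory Defs
  imports Main
begin

definition sep_rel :: "'a set \<Rightarrow> 'a set set \<Rightarrow> ('a \<times> 'a) set" where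
  "sep_rel X \<S> = {(x, y) \<in> X \<times> X. \<exists>S\<in>\<S>. x \<in> S \<and> y \<notin> S}"

definition star_union :: "'a set set \<Rightarrow> 'a set set \<Rightarrow> 'a set set" where
  "star_union \<S>1 \<S>2 = {S1 \<union> S2 | S1 S2. S1 \<in> \<S>1 \<and> S2 \<in> \<S>2}"

end

theory Submission
  imports Defs
begin

theorem proposition2p3:
  fixes X :: "'a set" and \<S>1 \<S>2 :: "'a set set"
  assumes "X \<noteq> {}"
    and "\<S>1 \<subseteq> Pow X" and "\<S>2 \<subseteq> Pow X"
    and "{} \<in> \<S>1" and "{} \<in> \<S>2"
  shows "sep_rel X (star_union \<S>1 \<S>2) = sep_rel X \<S>1 \<union> sep_rel X \<S>2"
proof
  show "sep_rel X (star_union \<S>1 \<S>2) \<subseteq> sep_rel X \<S>1 \<union> sep_rel X \<S>2"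
    unfolding sep_rel_def star_union_def by blast
next
  show "sep_rel X \<S>1 \<union> sep_rel X \<S>2 \<subseteq> sep_rel X (star_union \<S>1 \<S>2)"
  proof (clarsimp simp: sep_rel_def star_union_def, safe)
    fix x y S assume "S \<in> \<S>1" "x \<in> S" "y \<notin> S"
    then show "\<exists>Sa. (\<exists>S1 S2. Sa = S1 \<union> S2 \<and> S1 \<in> \<S>1 \<and> S2 \<in> \<S>2) \<and> x \<in> Sa \<and> y \<notin> Sa"
      using assms(5) by (intro exI[of _ "S \<union> {}"]) blast
  next
    fix x y S assume "S \<in> \<S>2" "x \<in> S" "y \<notin> S"
    then show "\<exists>Sa. (\<exists>S1 S2. Sa = S1 \<union> S2 \<and> S1 \<in> \<S>1 \<and> S2 \<in> \<S>2) \<and> x \<in> Sa \<and> y \<notin> Sa"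
      using assms(4) by (intro exI[of _ "{} \<union> S"]) blast
  qed
qed

end
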